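(* Every rooted tree has a good hyperbolic drawing.
   Context: Work in the hyperbolic plane (e.g. the Poincaré disk model), with its circle at infinity. A drawing of a rooted tree $T$ in the hyperbolic plane places each non-leaf vertex at a point of the hyperbolic plane and each leaf at a point of the circle at infinity, and draws each edge as a hyperbolic straight line segment (between two non-leaf vertices) or ray (from a non-leaf vertex to a leaf). For a non-root vertex $v$ with parent $u$, partition the hyperbolic plane into wedges bounded by the bisectors of the angles formed at $u$ by consecutive edges from $u$ (equivalently, take the Voronoi diagram generated by the rays from $u$ to its children); the dominance region of $v$ is the wedge containing $v$. A good hyperbolic drawing of $T$ is such a drawing in which, for any two non-root vertices $v$ and $w$, their dominance regions are nested (one contained in the other) if one of $v,w$ is an ancestor of the other, and disjoint otherwise. *)

theory Defs
  imports Complex_Main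
begin

(* Rooted trees: finite vertex set V, root r, parent function par.
   Every vertex reaches the root by iterating par; par r is irrelevant. *)
definition rooted_tree :: "'a set \<Rightarrow> ('a \<Rightarrow> 'a) \<Rightarrow> 'a \<Rightarrow> bool" where
  "rooted_tree V par r \<longleftrightarrow> finite V \<and> r \<in> V \<and>
     (\<forall>v \<in> V - {r}. par v \<in> V) \<and>
     (\<forall>v \<in> V. \<exists>k. (par ^^ k) v = r)"

definition children :: "'a set \<Rightarrow> ('a \<Rightarrow> 'a) \<Rightarrow> 'a \<Rightarrow> 'a \<Rightarrow> 'a set" where
  "children V par r u = {v \<in> V - {r}. par v = u}"

definition is_leaf :: "'a set \<Rightarrow> ('a \<Rightarrow> 'a) \<Rightarrow> 'a \<Rightarrow> 'a \<Rightarrow> bool" where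
  "is_leaf V par r v \<longleftrightarrow> v \<in> V \<and> children V par r v = {}"

definition ancestor :: "('a \<Rightarrow> 'a) \<Rightarrow> 'a \<Rightarrow> 'a \<Rightarrow> 'a \<Rightarrow> bool" where
  "ancestor par r w v \<longleftrightarrow> (\<exists>k>0. (par ^^ k) v = w \<and> (\<forall>j<k. (par ^^ j) v \<noteq> r))"

definition nbrs :: "'a set \<Rightarrow> ('a \<Rightarrow> 'a) \<Rightarrow> 'a \<Rightarrow> 'a \<Rightarrow> 'a set" where
  "nbrs V par r u = children V par r u \<union> (if u = r then {} else {par u})"

(* Poincare disk model: hyperbolic plane = open unit disk, circle at infinity = unit circle.
   The Moebius isometry moving u to 0; it maps geodesics through u to diameters and is conformal. *)
definition moeb :: "complex \<Rightarrow> complex \<Rightarrow> complex" where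
  "moeb u z = (z - u) / (1 - cnj u * z)"

definition vangle :: "complex \<Rightarrow> complex \<Rightarrow> real" where
  "vangle a b = arccos (Re (a * cnj b) / (cmod a * cmod b))"

(* hyperbolic angle at u (in the disk) between the geodesic rays/segments from u to p and to q *)
definition hangle :: "complex \<Rightarrow> complex \<Rightarrow> complex \<Rightarrow> real" where
  "hangle u p q = vangle (moeb u p) (moeb u q)"

(* A drawing: non-leaf vertices in the open disk, leaves on the unit circle; edges are then the
   unique geodesic segments/rays.  The wedge of each edge must be well defined, i.e. every edge
   from a vertex u leaves u in a direction different from all other edges at u. *)
definition hyp_drawing :: "'a set \<Rightarrow> ('a \<Rightarrow> 'a) \<Rightarrow> 'a \<Rightarrow> ('a \<Rightarrow> complex) \<Rightarrow> bool" where
  "hyp_drawing V par r pos \<longleftrightarrow>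
     (\<forall>v \<in> V. if is_leaf V par r v then cmod (pos v) = 1 else cmod (pos v) < 1) \<and>
     (\<forall>v \<in> V - {r}. pos v \<noteq> pos (par v) \<and>
        (\<forall>n \<in> nbrs V par r (par v) - {v}. hangle (pos (par v)) (pos v) (pos n) > 0))"

(* dominance region of a non-root vertex v with parent u: the open wedge at u, bounded by the
   bisectors of consecutive edges at u, which contains the edge uv *)
definition dom_region :: "'a set \<Rightarrow> ('a \<Rightarrow> 'a) \<Rightarrow> 'a \<Rightarrow> ('a \<Rightarrow> complex) \<Rightarrow> 'a \<Rightarrow> complex set" where
  "dom_region V par r pos v =
     {p. cmod p < 1 \<and> p \<noteq> pos (par v) \<and>
         (\<forall>n \<in> nbrs V par r (par v) - {v}.
            hangle (pos (par v)) p (pos v) < hangle (pos (par v)) p (pos n))}"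

definition good_hyp_drawing :: "'a set \<Rightarrow> ('a \<Rightarrow> 'a) \<Rightarrow> 'a \<Rightarrow> ('a \<Rightarrow> complex) \<Rightarrow> bool" where
  "good_hyp_drawing V par r pos \<longleftrightarrow> hyp_drawing V par r pos \<and>
     (\<forall>v \<in> V - {r}. \<forall>w \<in> V - {r}. v \<noteq> w \<longrightarrow>
        (if ancestor par r v w \<or> ancestor par r w v
         then dom_region V par r pos v \<subseteq> dom_region V par r pos w \<or>
              dom_region V par r pos w \<subseteq> dom_region V par r pos v
         else dom_region V par r pos v \<inter> dom_region V par r pos w = {}))"

end

theory Submission
  imports Defs
begin



lemma moeb_den_nz: assumes "cmod b < 1" "cmod z \<le> 1" shows "1 - cnj b * z \<noteq> 0"
proof
  assume "1 - cnj b * z = 0"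
  hence "cnj b * z = 1" by simp
  hence "cmod b * cmod z = 1" by (metis complex_mod_cnj norm_mult norm_one)
  moreover have "cmod b * cmod z < 1"
    using assms by (smt (verit) mult_left_le norm_ge_zero)
  ultimately show False by simp
qed

lemma moeb_id: "(cmod (1 - cnj b * z))^2 - (cmod (z - b))^2 = (1 - (cmod b)^2) * (1 - (cmod z)^2)"
  unfolding cmod_power2 by (simp add: power2_eq_square) algebra

lemma moeb_norm_lt: assumes "cmod b < 1" "cmod z < 1" shows "cmod (moeb b z) < 1"
proof -
  have d: "1 - cnj b * z \<noteq> 0" using assms moeb_den_nz by auto
  have "(1 - (cmod b)^2) * (1 - (cmod z)^2) > 0"
    using assms by (simp add: abs_square_less_1)
  hence "(cmod (z - b))^2 < (cmod (1 - cnj b * z))^2" using moeb_id[of b z] by linarith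
  hence "cmod (z - b) < cmod (1 - cnj b * z)" using power2_less_imp_less by fastforce
  thus ?thesis using d by (simp add: moeb_def norm_divide divide_less_eq)
qed

lemma moeb_norm_eq: assumes "cmod b < 1" "cmod z = 1" shows "cmod (moeb b z) = 1"
proof -
  have d: "1 - cnj b * z \<noteq> 0" using assms moeb_den_nz by auto
  have "(cmod (z - b))^2 = (cmod (1 - cnj b * z))^2" using moeb_id[of b z] assms by simp
  hence "cmod (z - b) = cmod (1 - cnj b * z)" by (simp add: power2_eq_iff_nonneg)
  thus ?thesis using d by (simp add: moeb_def norm_divide)
qed

lemma moeb_norm_le: assumes "cmod b < 1" "cmod z \<le> 1" shows "cmod (moeb b z) \<le> 1"
  using assms moeb_norm_lt moeb_norm_eq by (metis less_eq_real_def)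

lemma moeb_inv: assumes "cmod b < 1" "cmod z \<le> 1" shows "moeb (-b) (moeb b z) = z"
proof -
  have d: "1 - cnj b * z \<noteq> 0" using assms moeb_den_nz by auto
  have e: "1 - cnj b * b \<noteq> 0"
    using moeb_den_nz[of b b] assms by simp
  have 1: "(z - b)/(1 - cnj b * z) + b = z * (1 - cnj b * b) / (1 - cnj b * z)"
    using d by (simp add: field_simps)
  have 2: "1 + cnj b * ((z - b)/(1 - cnj b * z)) = (1 - cnj b * b) / (1 - cnj b * z)"
    using d by (simp add: field_simps)
  have "moeb (-b) (moeb b z) = ((z - b)/(1 - cnj b * z) + b) / (1 + cnj b * ((z - b)/(1 - cnj b * z)))"
    by (simp add: moeb_def)
  also have "\<dots> = z" unfolding 1 2 using d e by simp
  finally show ?thesis .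
qed

lemma moeb_zero_iff: assumes "cmod b < 1" "cmod z \<le> 1" shows "moeb b z = 0 \<longleftrightarrow> z = b"
  using moeb_den_nz[OF assms] by (simp add: moeb_def)

lemma cnj_unit: "cmod w = 1 \<Longrightarrow> w * cnj w = 1"
  by (metis complex_norm_square mult.commute of_real_1 power_one)

lemma moeb_comp:
  assumes a: "cmod a < 1" and b: "cmod b < 1" and w: "cmod w = 1" and z: "cmod z \<le> 1"
  defines "b' \<equiv> moeb (-b) (cnj w * a)" and "Om \<equiv> (w + a * cnj b) / (1 + cnj a * w * b)"
  shows "moeb a (w * moeb b z) = Om * moeb b' z" and "cmod Om = 1" and "cmod b' < 1"
proof -
  have ww: "w * cnj w = 1" using cnj_unit w by blast
  have na: "cmod (cnj w * a) < 1" using a w by (simp add: norm_mult)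
  show bb: "cmod b' < 1" unfolding b'_def
    using moeb_norm_lt[of "-b" "cnj w * a"] na b by simp
  have d1: "1 + cnj b * (cnj w * a) \<noteq> 0"
    using moeb_den_nz[of "-b" "cnj w * a"] na b by simp
  have wnz: "w \<noteq> 0" using w by auto
  have lam_nz: "w + a * cnj b \<noteq> 0"
  proof
    assume "w + a * cnj b = 0"
    hence "cnj w * (w + a * cnj b) = 0" by simp
    moreover have "cnj w * (w + a * cnj b) = 1 + cnj b * (cnj w * a)" using ww by algebra
    ultimately show False using d1 by simp
  qed
  have b'eq: "b' = (w * b + a) / (w + a * cnj b)"
  proof -
    have "b' = (cnj w * a + b) / (1 + cnj b * (cnj w * a))" unfolding b'_def moeb_def by simp
    also have "\<dots> = (w * (cnj w * a + b)) / (w * (1 + cnj b * (cnj w * a)))" using wnz by simp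
    also have "w * (cnj w * a + b) = w * b + a" using ww by algebra
    also have "w * (1 + cnj b * (cnj w * a)) = w + a * cnj b" using ww by algebra
    finally show ?thesis .
  qed
  have mu_nz: "1 + cnj a * w * b \<noteq> 0"
  proof -
    have "cmod (- (w * b)) < 1" using b w by (simp add: norm_mult)
    from moeb_den_nz[of a "- (w*b)"] this a show ?thesis by (simp add: algebra_simps)
  qed
  have lam: "w + a * cnj b = w * cnj (1 + cnj a * w * b)"
  proof -
    have "cnj (1 + cnj a * w * b) = 1 + a * cnj w * cnj b" by simp
    thus ?thesis using ww by algebra
  qed
  show om: "cmod Om = 1" unfolding Om_def lam norm_divide norm_mult complex_mod_cnj using mu_nz w
    by simp
  have cb': "cnj b' = (cnj b + cnj a * w) / (1 + cnj a * w * b)"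
  proof -
    have "cnj b' = (cnj w * cnj b + cnj a) / (cnj w + cnj a * b)" unfolding b'eq by simp
    also have "\<dots> = (w * (cnj w * cnj b + cnj a)) / (w * (cnj w + cnj a * b))" using wnz by simp
    also have "w * (cnj w * cnj b + cnj a) = cnj b + cnj a * w" using ww by algebra
    also have "w * (cnj w + cnj a * b) = 1 + cnj a * w * b" using ww by algebra
    finally show ?thesis .
  qed
  have d: "1 - cnj b * z \<noteq> 0" using moeb_den_nz b z by blast
  have d': "1 - cnj b' * z \<noteq> 0" using moeb_den_nz bb z by blast
  define D where "D = 1 - cnj b * z"
  define Num where "Num = (w + a * cnj b) * z - (w * b + a)"
  define Den where "Den = (1 + cnj a * w * b) - (cnj b + cnj a * w) * z"
  have dD: "D \<noteq> 0" using d D_def by simp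
  have e1: "w * ((z - b) / D) - a = (w * (z - b) - a * D) / D" using dD by (simp add: field_simps)
  have e2: "1 - cnj a * (w * ((z - b) / D)) = (D - cnj a * w * (z - b)) / D" using dD by (simp add: field_simps)
  have e3: "w * (z - b) - a * D = Num" unfolding Num_def D_def by algebra
  have e4: "D - cnj a * w * (z - b) = Den" unfolding Den_def D_def by algebra
  have "moeb a (w * moeb b z) = (w * ((z - b) / D) - a) / (1 - cnj a * (w * ((z - b) / D)))"
    by (simp add: moeb_def D_def)
  also have "\<dots> = Num / Den" unfolding e1 e2 e3 e4 using dD by simp
  finally have L: "moeb a (w * moeb b z) = Num / Den" .
  have "Om * moeb b' z = ((w + a * cnj b) * (z - b')) / ((1 + cnj a * w * b) * (1 - cnj b' * z))"
    unfolding Om_def moeb_def by simp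
  also have "(w + a * cnj b) * (z - b') = Num" unfolding Num_def b'eq using lam_nz by (simp add: right_diff_distrib)
  also have "(1 + cnj a * w * b) * (1 - cnj b' * z) = Den" unfolding Den_def cb' using mu_nz by (simp add: right_diff_distrib)
  finally show "moeb a (w * moeb b z) = Om * moeb b' z" using L by simp
qed

lemma vangle_rot: "cmod w = 1 \<Longrightarrow> vangle (w * x) (w * y) = vangle x y"
proof -
  assume w: "cmod w = 1"
  have "w * x * cnj (w * y) = (w * cnj w) * (x * cnj y)" by simp
  hence e: "w * x * cnj (w * y) = x * cnj y" using cnj_unit[OF w] by simp
  show ?thesis unfolding vangle_def e norm_mult w by simp
qed

lemma vangle_scale2: "s > 0 \<Longrightarrow> vangle x (complex_of_real s * y) = vangle x y"
proof -
  assume s: "s > 0"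
  have "Re (x * cnj (complex_of_real s * y)) = s * Re (x * cnj y)" by (simp add: algebra_simps)
  thus ?thesis using s by (simp add: vangle_def norm_mult)
qed

lemma vangle_scale1: "s > 0 \<Longrightarrow> vangle (complex_of_real s * x) y = vangle x y"
proof -
  assume s: "s > 0"
  have "Re (complex_of_real s * x * cnj y) = s * Re (x * cnj y)" by (simp add: algebra_simps)
  thus ?thesis using s by (simp add: vangle_def norm_mult)
qed

lemma re_bound: "\<bar>Re (x * cnj e) / cmod x\<bar> \<le> 1" if "cmod e = 1" for x e
proof (cases "x = 0")
  case False
  have p: "cmod x > 0" using False by simp
  have m: "cmod (x * cnj e) = cmod x" by (simp only: norm_mult complex_mod_cnj that mult_1_right)
  have q: "\<bar>Re (x * cnj e)\<bar> \<le> cmod x" using abs_Re_le_cmod[of "x * cnj e"] unfolding m .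
  have "\<bar>Re (x * cnj e) / cmod x\<bar> = \<bar>Re (x * cnj e)\<bar> / cmod x" by (simp only: abs_divide abs_norm_cancel)
  also have "\<dots> \<le> cmod x / cmod x" by (rule divide_right_mono[OF q]) simp
  also have "\<dots> = 1" using p by simp
  finally show ?thesis .
qed simp

lemma vangle_less:
  assumes "x \<noteq> 0" "cmod e1 = 1" "cmod e2 = 1"
  shows "vangle x e1 < vangle x e2 \<longleftrightarrow> Re (x * cnj e2) < Re (x * cnj e1)"
proof -
  have b1: "\<bar>Re (x * cnj e1) / cmod x\<bar> \<le> 1" by (rule re_bound) (rule assms)
  have b2: "\<bar>Re (x * cnj e2) / cmod x\<bar> \<le> 1" by (rule re_bound) (rule assms)
  have "vangle x e1 < vangle x e2 \<longleftrightarrow> Re (x * cnj e2) / cmod x < Re (x * cnj e1) / cmod x"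
    unfolding vangle_def assms(2) assms(3) mult_1_right by (rule arccos_less_mono[OF b1 b2])
  also have "\<dots> \<longleftrightarrow> Re (x * cnj e2) < Re (x * cnj e1)" using assms by (simp add: divide_less_cancel)
  finally show ?thesis .
qed
lemma vangle_pos:
  assumes "cmod e1 = 1" "cmod e2 = 1" "Re (e1 * cnj e2) < 1"
  shows "vangle e1 e2 > 0"
proof -
  have "\<bar>Re (e1 * cnj e2)\<bar> \<le> 1" using re_bound[of e2 e1] assms by simp
  hence "arccos 1 < arccos (Re (e1 * cnj e2))" using assms by (intro arccos_less_arccos) auto
  thus ?thesis using assms by (simp add: vangle_def)
qed




lemma core_real:
  fixes x y T k p q :: real
  assumes T: "T = 1 - k/32" "0 < k" "k \<le> 1"
    and x: "\<bar>x\<bar> < 1" "\<bar>y\<bar> < 1" and xy: "(1+x)^2 + y^2 > 1/4"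
    and pq: "\<bar>q\<bar> \<le> 1" "1 - p \<ge> k"
  shows "T*((1+x)^2+y^2) + (1-T)^2*x > 1/8"
    and "(T*((1+x)^2+y^2) + (1-T)^2*x) * (1 - p) - y*(1 - T^2) * q > 0"
proof -
  have T1: "T \<ge> 31/32" "T < 1" using T by auto
  have a1: "T*((1+x)^2+y^2) \<ge> T * (1/4)" using xy T1 by (intro mult_left_mono) auto
  have e0: "(1-T)^2 \<le> 1/1024"
  proof -
    have "0 \<le> 1 - T" "1 - T \<le> 1/32" using T1 by auto
    hence "(1-T)^2 \<le> (1/32)^2" by (intro power_mono) auto
    moreover have "(1/32::real)^2 = 1/1024" by (simp add: power2_eq_square)
    ultimately show ?thesis by linarith
  qed
  have a2: "(1-T)^2*x \<ge> -((1-T)^2)"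
  proof -
    have "(1-T)^2 * (-1) \<le> (1-T)^2 * x" using x by (intro mult_left_mono) auto
    thus ?thesis by simp
  qed
  show RQ: "T*((1+x)^2+y^2) + (1-T)^2*x > 1/8" using a1 a2 e0 T1 by linarith
  define R where "R = T*((1+x)^2+y^2) + (1-T)^2*x"
  have R: "R > 1/8" using RQ R_def by simp
  have b1: "R * (1 - p) \<ge> R * k" using R pq by (intro mult_left_mono) auto
  have b2: "R * k \<ge> (1/8) * k" using R T by (intro mult_right_mono) auto
  have c0: "1 - T^2 = (1-T)*(1+T)" by (simp add: power2_eq_square algebra_simps)
  have c1: "1 - T^2 \<le> k/16"
  proof -
    have "(1-T)*(1+T) \<le> (1-T)*2" using T1 by (intro mult_left_mono) auto
    moreover have "(1-T)*2 = k/16" using T by simp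
    ultimately show ?thesis using c0 by linarith
  qed
  have c2: "1 - T^2 \<ge> 0" using c0 T1 by simp
  have "\<bar>y*(1 - T^2) * q\<bar> = \<bar>y\<bar> * (1 - T^2) * \<bar>q\<bar>" using c2 by (simp add: abs_mult)
  also have "\<dots> \<le> 1 * (1 - T^2) * 1" using x pq c2 by (intro mult_mono) auto
  also have "\<dots> = 1 - T^2" by simp
  also have "\<dots> \<le> k/16" by (rule c1)
  finally have "\<bar>y*(1 - T^2) * q\<bar> \<le> k/16" .
  hence c3: "y*(1 - T^2) * q \<le> k/16" by (simp add: abs_le_iff)
  show "(T*((1+x)^2+y^2) + (1-T)^2*x) * (1 - p) - y*(1 - T^2) * q > 0"
    using b1 b2 c3 T unfolding R_def by linarith
qed

lemma core:
  fixes T k :: real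
  assumes T: "T = 1 - k/32" "0 < k" "k \<le> 1"
    and z: "cmod z < 1" and e: "cmod e = 1" "Re e \<ge> 0" and h: "Re (z * (cnj e + 1)) > 0"
    and f: "cmod f = 1" "1 - Re f \<ge> k"
  shows "Re ((z + of_real T) / (1 + of_real T * z)) > 0"
    and "Re ((z + of_real T) / (1 + of_real T * z) * (1 - cnj f)) > 0"
proof -
  have T1: "T \<ge> 31/32" "T < 1" using T by auto
  have "Re ((1+z) * (cnj e + 1)) = Re (cnj e + 1) + Re (z * (cnj e + 1))" by (simp add: algebra_simps)
  hence r1: "Re ((1+z) * (cnj e + 1)) > 1" using h e by simp
  have "cmod (cnj e + 1) \<le> 2" using norm_triangle_ineq[of "cnj e" 1] e by simp
  moreover have "cmod (1+z) * cmod (cnj e + 1) > 1"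
    using r1 complex_Re_le_cmod[of "(1+z) * (cnj e + 1)"] by (simp add: norm_mult)
  moreover have "cmod (1+z) * cmod (cnj e + 1) \<le> cmod (1+z) * 2"
    using calculation(1) by (intro mult_left_mono) auto
  ultimately have "cmod (1+z) * 2 > 1" by linarith
  hence "cmod (1+z) > 1/2" by simp
  hence "(cmod (1+z))^2 > (1/2)^2" by (intro power_strict_mono) auto
  moreover have "(1/2::real)^2 = 1/4" by (simp add: power2_eq_square)
  ultimately have xy: "(1 + Re z)^2 + (Im z)^2 > 1/4" by (simp only: cmod_power2) simp
  have xb: "\<bar>Re z\<bar> < 1" "\<bar>Im z\<bar> < 1" using z abs_Re_le_cmod abs_Im_le_cmod le_less_trans by blast+
  have qb: "\<bar>Im f\<bar> \<le> 1" using abs_Im_le_cmod[of f] f by simp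
  note cr = core_real[OF T xb xy qb f(2)]
  have nT: "cmod (complex_of_real T * z) < 1" using z T1 by (simp add: norm_mult) (smt (verit) mult_less_cancel_right1 mult_nonneg_nonneg norm_ge_zero mult_le_one)
  have dnz: "1 + complex_of_real T * z \<noteq> 0"
  proof
    assume "1 + complex_of_real T * z = 0"
    hence "complex_of_real T * z = -1" by (simp add: add_eq_0_iff)
    thus False using nT by simp
  qed
  define D where "D = (cmod (1 + complex_of_real T * z))^2"
  have D: "D > 0" using dnz D_def by simp
  define Q where "Q = (z + complex_of_real T) * cnj (1 + complex_of_real T * z)"
  have W: "(z + of_real T) / (1 + of_real T * z) = Q / of_real D"
    unfolding Q_def D_def by (rule complex_div_cnj)
  have ReQ: "Re Q = T*((1+Re z)^2+(Im z)^2) + (1-T)^2*Re z"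
    unfolding Q_def by (simp add: power2_eq_square algebra_simps)
  have ImQ: "Im Q = Im z * (1 - T^2)"
    unfolding Q_def by (simp add: power2_eq_square algebra_simps)
  show "Re ((z + of_real T) / (1 + of_real T * z)) > 0"
    unfolding W using D cr(1) ReQ by (simp add: Re_divide_of_real)
  have "Re (Q * (1 - cnj f)) = Re Q * (1 - Re f) - Im Q * Im f" by (simp add: algebra_simps)
  hence "Re (Q * (1 - cnj f)) > 0" using cr(2) ReQ ImQ by (simp add: mult.assoc)
  moreover have "Q / of_real D * (1 - cnj f) = (Q * (1 - cnj f)) / of_real D" by simp
  ultimately show "Re ((z + of_real T) / (1 + of_real T * z) * (1 - cnj f)) > 0"
    unfolding W using D by (simp only: Re_divide_of_real) simp
qed




definition Inv :: "(complex \<Rightarrow> complex) \<Rightarrow> (complex \<Rightarrow> complex) \<Rightarrow> bool" where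
  "Inv f g \<longleftrightarrow> (\<exists>Om B. cmod Om = 1 \<and> cmod B < 1 \<and> (\<forall>z. cmod z \<le> 1 \<longrightarrow> f z = Om * moeb B z)
      \<and> (\<forall>w. cmod w \<le> 1 \<longrightarrow> g w = moeb (-B) (cnj Om * w)))"

lemma moeb_inv2: assumes "cmod b < 1" "cmod z \<le> 1" shows "moeb b (moeb (-b) z) = z"
  using moeb_inv[of "-b" z] assms by simp

lemma Inv_id: "Inv id id"
  unfolding Inv_def by (rule exI[of _ 1], rule exI[of _ 0]) (simp add: moeb_def)

lemma Inv_step:
  assumes I: "Inv f g" and a: "cmod a < 1" and e: "cmod eta = 1"
  shows "Inv (\<lambda>z. eta * moeb a (f z)) (\<lambda>w. g (moeb (-a) (cnj eta * w)))"
proof -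
  obtain Om B where O: "cmod Om = 1" and B: "cmod B < 1"
    and f: "\<And>z. cmod z \<le> 1 \<Longrightarrow> f z = Om * moeb B z"
    and g: "\<And>w. cmod w \<le> 1 \<Longrightarrow> g w = moeb (-B) (cnj Om * w)"
    using I unfolding Inv_def by blast
  define b' where "b' = moeb (-B) (cnj Om * a)"
  define Om' where "Om' = (Om + a * cnj B) / (1 + cnj a * Om * B)"
  have comp: "\<And>z. cmod z \<le> 1 \<Longrightarrow> moeb a (Om * moeb B z) = Om' * moeb b' z"
    using moeb_comp(1)[OF a B O] unfolding b'_def Om'_def by blast
  have O': "cmod Om' = 1" using moeb_comp(2)[OF a B O, of 0] unfolding Om'_def by simp
  have b': "cmod b' < 1" using moeb_comp(3)[OF a B O, of 0] unfolding b'_def by simp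
  define F where "F = (\<lambda>z. eta * moeb a (f z))"
  have F: "\<And>z. cmod z \<le> 1 \<Longrightarrow> F z = (eta * Om') * moeb b' z"
    unfolding F_def using f comp by simp
  have eO: "cmod (eta * Om') = 1" using e O' by (simp add: norm_mult)
  have ecn: "\<And>x. cmod x = 1 \<Longrightarrow> cnj x * x = 1" using cnj_unit by (simp add: mult.commute)
  have ginv: "g (moeb (-a) (cnj eta * w)) = moeb (-b') (cnj (eta * Om') * w)" if w: "cmod w \<le> 1" for w
  proof -
    define u where "u = moeb (-b') (cnj (eta * Om') * w)"
    have cw: "cmod (cnj (eta * Om') * w) \<le> 1" using w eO by (simp add: norm_mult)
    have u1: "cmod u \<le> 1" unfolding u_def using moeb_norm_le[of "-b'"] b' cw by simp
    have "F u = (eta * Om') * (cnj (eta * Om') * w)" using F[OF u1] unfolding u_def using moeb_inv2[OF b' cw]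
      by simp
    also have "\<dots> = ((eta * Om') * cnj (eta * Om')) * w" by (simp only: mult.assoc)
    also have "\<dots> = w" using cnj_unit[OF eO] by simp
    finally have Fu: "F u = w" .
    define x where "x = moeb (-a) (cnj eta * w)"
    have cx0: "cmod (cnj eta * w) \<le> 1" using w e by (simp add: norm_mult)
    have x1: "cmod x \<le> 1" unfolding x_def using moeb_norm_le[of "-a"] a cx0 by simp
    have cx: "cmod (cnj Om * x) \<le> 1" using x1 O by (simp add: norm_mult)
    have gx1: "cmod (g x) \<le> 1" using g[OF x1] moeb_norm_le[of "-B"] B cx by simp
    have "f (g x) = Om * (cnj Om * x)" using f[OF gx1] g[OF x1] moeb_inv2[OF B cx] by simp
    also have "\<dots> = x" using cnj_unit[OF O] by (simp add: mult.assoc[symmetric])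
    finally have "F (g x) = eta * moeb a x" unfolding F_def by simp
    also have "moeb a x = cnj eta * w" unfolding x_def by (rule moeb_inv2[OF a cx0])
    also have "eta * (cnj eta * w) = w" using cnj_unit[OF e] by (simp add: mult.assoc[symmetric])
    finally have Fg: "F (g x) = w" .
    have "(eta * Om') * moeb b' (g x) = (eta * Om') * moeb b' u" using F[OF gx1] F[OF u1] Fg Fu by simp
    hence "moeb b' (g x) = moeb b' u" using eO by auto
    hence "moeb (-b') (moeb b' (g x)) = moeb (-b') (moeb b' u)" by simp
    hence "g x = u" using moeb_inv[OF b' gx1] moeb_inv[OF b' u1] by simp
    thus ?thesis unfolding x_def u_def .
  qed
  show ?thesis unfolding Inv_def
    by (rule exI[of _ "eta * Om'"], rule exI[of _ b']) (use eO b' F ginv in \<open>auto simp: F_def\<close>)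
qed

locale tr =
  fixes V :: "'a set" and par :: "'a \<Rightarrow> 'a" and r :: 'a
  assumes rt: "rooted_tree V par r"
begin

lemma finV: "finite V" and rV: "r \<in> V" and parV: "\<And>v. v \<in> V \<Longrightarrow> v \<noteq> r \<Longrightarrow> par v \<in> V"
  and reach: "\<And>v. v \<in> V \<Longrightarrow> \<exists>k. (par ^^ k) v = r"
  using rt unfolding rooted_tree_def by auto

lemma ch_iff: "n \<in> children V par r u \<longleftrightarrow> n \<in> V \<and> n \<noteq> r \<and> par n = u"
  unfolding children_def by auto

lemma no2cyc: assumes "a \<in> V" "a \<noteq> r" "b \<noteq> r" "par a = b" "par b = a" shows False
proof -
  have "(par ^^ k) a \<in> {a, b}" for k
    by (induction k) (use assms in auto)
  moreover obtain k where "(par ^^ k) a = r" using reach[OF assms(1)] by blast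
  ultimately show False using assms by (metis insertE singletonD)
qed

lemma par_nonleaf: assumes "v \<in> V" "v \<noteq> r" shows "\<not> is_leaf V par r (par v)" "par v \<in> V"
  using assms parV unfolding is_leaf_def children_def by auto

definition depth :: "'a \<Rightarrow> nat" where "depth v = (LEAST k. (par ^^ k) v = r)"

lemma depth_spec: assumes "x \<in> V" shows "(par ^^ depth x) x = r" "\<And>j. j < depth x \<Longrightarrow> (par ^^ j) x \<noteq> r"
  using LeastI_ex[OF reach[OF assms]] not_less_Least unfolding depth_def by auto

lemma depth_eq: assumes "(par ^^ k) x = r" "\<And>j. j < k \<Longrightarrow> (par ^^ j) x \<noteq> r" shows "depth x = k"
  unfolding depth_def
proof (rule Least_equality)
  show "(par ^^ k) x = r" by fact
  fix y assume "(par ^^ y) x = r" thus "k \<le> y" using assms(2) not_less by blast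
qed

lemma depth_r: "depth r = 0" by (rule depth_eq) auto

lemma depth_par: assumes "v \<in> V" "v \<noteq> r" shows "depth v = Suc (depth (par v))"
proof -
  obtain m where m: "depth v = Suc m"
    using depth_spec[OF assms(1)] assms(2) by (cases "depth v") auto
  have "depth (par v) = m"
  proof (rule depth_eq)
    show "(par ^^ m) (par v) = r" using depth_spec(1)[OF assms(1)] m by (simp add: funpow_Suc_right del: funpow.simps)
    fix j assume "j < m"
    hence "(par ^^ Suc j) v \<noteq> r" using depth_spec(2)[OF assms(1), of "Suc j"] m by (simp del: funpow.simps)
    thus "(par ^^ j) (par v) \<noteq> r" by (simp add: funpow_Suc_right del: funpow.simps)
  qed
  thus ?thesis using m by simp
qed

lemma anc_depth: assumes "ancestor par r x w" "x \<in> V"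
  shows "\<exists>k>0. depth w = k + depth x \<and> (par ^^ k) w = x"
proof -
  obtain k where k: "k > 0" "(par ^^ k) w = x" "\<And>j. j < k \<Longrightarrow> (par ^^ j) w \<noteq> r"
    using assms(1) unfolding ancestor_def by blast
  have "depth w = depth x + k"
  proof (rule depth_eq)
    show "(par ^^ (depth x + k)) w = r" using depth_spec(1)[OF assms(2)] k(2) by (simp add: funpow_add)
    fix j assume j: "j < depth x + k"
    show "(par ^^ j) w \<noteq> r"
    proof (cases "j < k")
      case True thus ?thesis using k(3) by blast
    next
      case False
      then obtain i where i: "j = i + k" "i < depth x" using j by (metis add.commute less_diff_conv2 not_less le_add_diff_inverse)
      have "(par ^^ j) w = (par ^^ i) x" using k(2) i(1) by (simp add: funpow_add)
      thus ?thesis using depth_spec(2)[OF assms(2) i(2)] by simp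
    qed
  qed
  thus ?thesis using k by auto
qed

end



context tr begin

definition nu :: "'a \<Rightarrow> nat" where "nu = (SOME h. bij_betw h V {0..<card V})"

lemma nu_bij: "bij_betw nu V {0..<card V}"
  unfolding nu_def using someI_ex[OF ex_bij_betw_finite_nat[OF finV]] .

definition th :: "'a \<Rightarrow> real" where
  "th v = pi / 2 * (real (nu v) / real (card V)) - pi / 4"

lemma cardpos: "card V > 0" using finV rV card_gt_0_iff by blast

lemma tfrac: assumes "v \<in> V" shows "0 \<le> real (nu v) / real (card V)" "real (nu v) / real (card V) < 1"
proof -
  have "nu v < card V" using nu_bij assms unfolding bij_betw_def by auto
  thus "real (nu v) / real (card V) < 1" using cardpos by simp
qed simp

lemma th_bounds: assumes "v \<in> V" shows "- (pi/4) \<le> th v" "th v < pi/4"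
proof -
  have "pi / 2 * (real (nu v) / real (card V)) \<ge> 0" using tfrac[OF assms] by simp
  thus "- (pi/4) \<le> th v" unfolding th_def by simp
  have "pi / 2 * (real (nu v) / real (card V)) < pi / 2 * 1" using tfrac[OF assms] pi_gt_zero
    by (intro mult_strict_left_mono) auto
  thus "th v < pi/4" unfolding th_def by simp
qed

lemma cos_th: assumes "v \<in> V" shows "cos (th v) \<ge> 0"
  using th_bounds[OF assms] pi_gt_zero by (intro cos_ge_zero) auto

lemma th_diff: assumes "a \<in> V" "b \<in> V" "a \<noteq> b" shows "1 - cos (th a - th b) > 0"
proof -
  have ne: "nu a \<noteq> nu b" using nu_bij assms unfolding bij_betw_def inj_on_def by auto
  have "real (nu a) / real (card V) \<noteq> real (nu b) / real (card V)" using ne cardpos by simp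
  hence "th a \<noteq> th b" unfolding th_def by simp
  hence d0: "\<bar>th a - th b\<bar> > 0" by simp
  have h1: "th a - th b < pi/2" "-(th a - th b) < pi/2" using th_bounds[OF assms(1)] th_bounds[OF assms(2)] by linarith+
  have "\<bar>th a - th b\<bar> < pi/2" using h1 by (simp only: abs_less_iff)
  hence "cos \<bar>th a - th b\<bar> < cos 0" using d0 pi_gt_zero by (intro cos_monotone_0_pi) linarith+
  thus ?thesis by simp
qed

definition kap :: real where
  "kap = Min (insert 1 ((\<lambda>(a,b). 1 - cos (th a - th b)) ` {(a,b). a \<in> V \<and> b \<in> V \<and> a \<noteq> b}))"

lemma kap: "0 < kap" "kap \<le> 1" "\<And>a b. a \<in> V \<Longrightarrow> b \<in> V \<Longrightarrow> a \<noteq> b \<Longrightarrow> kap \<le> 1 - cos (th a - th b)"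
proof -
  define S where "S = insert 1 ((\<lambda>(a,b). 1 - cos (th a - th b)) ` {(a,b). a \<in> V \<and> b \<in> V \<and> a \<noteq> b})"
  have "{(a,b). a \<in> V \<and> b \<in> V \<and> a \<noteq> b} \<subseteq> V \<times> V" by auto
  hence "finite {(a,b). a \<in> V \<and> b \<in> V \<and> a \<noteq> b}"
    using finite_subset finite_cartesian_product[OF finV finV] by blast
  hence fin: "finite S" unfolding S_def by simp
  have k: "kap = Min S" unfolding kap_def S_def ..
  have "\<forall>x\<in>S. x > 0" unfolding S_def using th_diff by auto
  thus "0 < kap" unfolding k using Min_in[OF fin] S_def by auto
  show "kap \<le> 1" unfolding k using Min_le[OF fin] S_def by auto
  fix a b assume "a \<in> V" "b \<in> V" "a \<noteq> b"
  hence "1 - cos (th a - th b) \<in> S" unfolding S_def by auto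
  thus "kap \<le> 1 - cos (th a - th b)" unfolding k using Min_le[OF fin] by auto
qed

definition TT :: real where "TT = 1 - kap / 32"

lemma TT: "0 < TT" "TT < 1" using kap unfolding TT_def by auto

definition av :: "'a \<Rightarrow> complex" where "av v = complex_of_real TT * cis (th v)"

lemma av_norm: "cmod (av v) = TT" "cmod (av v) < 1"
  using TT unfolding av_def by (auto simp: norm_mult)

primrec fr :: "nat \<Rightarrow> 'a \<Rightarrow> (complex \<Rightarrow> complex) \<times> (complex \<Rightarrow> complex)" where
  "fr 0 v = (id, id)"
| "fr (Suc n) v = ((\<lambda>z. cis (- th v) * moeb (av v) (fst (fr n (par v)) z)),
                    (\<lambda>w. snd (fr n (par v)) (moeb (- av v) (cis (th v) * w))))"

lemma fr_Inv: "Inv (fst (fr n v)) (snd (fr n v))"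
proof (induction n arbitrary: v)
  case 0 thus ?case using Inv_id by (simp add: id_def)
next
  case (Suc n)
  have "Inv (\<lambda>z. cis (- th v) * moeb (av v) (fst (fr n (par v)) z))
            (\<lambda>w. snd (fr n (par v)) (moeb (- av v) (cnj (cis (- th v)) * w)))"
    by (rule Inv_step[OF Suc.IH av_norm(2)]) simp
  thus ?case by (simp add: cis_cnj)
qed

definition psi :: "'a \<Rightarrow> complex \<Rightarrow> complex" where "psi v = fst (fr (depth v) v)"
definition psinv :: "'a \<Rightarrow> complex \<Rightarrow> complex" where "psinv v = snd (fr (depth v) v)"

lemma psi_Inv: "Inv (psi v) (psinv v)" unfolding psi_def psinv_def by (rule fr_Inv)

lemma psi_r: "psi r = id" "psinv r = id" unfolding psi_def psinv_def depth_r by simp_all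

lemma psi_step: assumes "v \<in> V" "v \<noteq> r"
  shows "psi v = (\<lambda>z. cis (- th v) * moeb (av v) (psi (par v) z))"
    "psinv v = (\<lambda>w. psinv (par v) (moeb (- av v) (cis (th v) * w)))"
  unfolding psi_def psinv_def depth_par[OF assms] by simp_all

definition cen :: "'a \<Rightarrow> complex" where "cen v = psinv v 0"

lemma Inv_props:
  assumes "Inv f g"
  shows "\<And>w. cmod w \<le> 1 \<Longrightarrow> f (g w) = w"
    "\<And>w. cmod w \<le> 1 \<Longrightarrow> cmod (g w) \<le> 1"
    "\<And>w. cmod w < 1 \<Longrightarrow> cmod (g w) < 1"
    "\<And>w. cmod w = 1 \<Longrightarrow> cmod (g w) = 1"
    "\<And>z. cmod z \<le> 1 \<Longrightarrow> cmod (f z) \<le> 1"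
    "\<And>z. cmod z < 1 \<Longrightarrow> cmod (f z) < 1"
    "\<And>z. cmod z \<le> 1 \<Longrightarrow> g (f z) = z"
    "\<And>z. cmod z \<le> 1 \<Longrightarrow> f z = 0 \<longleftrightarrow> z = g 0"
    "\<And>p q. cmod p \<le> 1 \<Longrightarrow> cmod q \<le> 1 \<Longrightarrow> hangle (g 0) p q = vangle (f p) (f q)"
    "cmod (g 0) < 1"
proof -
  obtain Om B where Ou: "cmod Om = 1" and B: "cmod B < 1"
    and f: "\<And>z. cmod z \<le> 1 \<Longrightarrow> f z = Om * moeb B z"
    and g: "\<And>w. cmod w \<le> 1 \<Longrightarrow> g w = moeb (-B) (cnj Om * w)"
    using assms unfolding Inv_def by blast
  have mB: "cmod (-B) < 1" using B by simp
  have g0: "g 0 = B" using g[of 0] by (simp add: moeb_def)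
  show "cmod (g 0) < 1" using g0 B by simp
  {
  fix w assume w: "cmod w \<le> 1"
  have cw: "cmod (cnj Om * w) \<le> 1" using w Ou by (simp add: norm_mult)
  show "cmod (g w) \<le> 1" using g[OF w] moeb_norm_le[OF mB cw] by simp
  hence "f (g w) = Om * (cnj Om * w)" using f g[OF w] moeb_inv2[OF B cw] by simp
  also have "\<dots> = (Om * cnj Om) * w" by (simp only: mult.assoc)
  finally show "f (g w) = w" using cnj_unit[OF Ou] by simp
  }
  {
  fix w assume w: "cmod w < 1"
  have cw: "cmod (cnj Om * w) < 1" using w Ou by (simp add: norm_mult)
  show "cmod (g w) < 1" using g[of w] w moeb_norm_lt[OF mB cw] by simp
  }
  {
  fix w assume w: "cmod w = 1"
  have cw: "cmod (cnj Om * w) = 1" using w Ou by (simp add: norm_mult)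
  show "cmod (g w) = 1" using g[of w] w moeb_norm_eq[OF mB cw] by simp
  }
  {
  fix z assume z: "cmod z \<le> 1"
  show "cmod (f z) \<le> 1" using f[OF z] moeb_norm_le[OF B z] Ou by (simp add: norm_mult)
  have m1: "cmod (moeb B z) \<le> 1" using moeb_norm_le[OF B z] .
  have "g (f z) = moeb (-B) (cnj Om * (Om * moeb B z))" using f[OF z] g Ou m1 by (simp add: norm_mult)
  also have "cnj Om * (Om * moeb B z) = moeb B z" using cnj_unit[OF Ou]
    by (simp add: mult.assoc[symmetric] mult.commute[of "cnj Om"])
  finally show "g (f z) = z" using moeb_inv[OF B z] by simp
  show "f z = 0 \<longleftrightarrow> z = g 0" using f[OF z] Ou moeb_zero_iff[OF B z] g0 by auto
  }
  {
  fix z assume z: "cmod z < 1"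
  show "cmod (f z) < 1" using f[of z] z moeb_norm_lt[OF B z] Ou by (simp add: norm_mult)
  }
  {
  fix p q assume p: "cmod p \<le> 1" and q: "cmod q \<le> 1"
  show "hangle (g 0) p q = vangle (f p) (f q)"
    unfolding hangle_def g0 f[OF p] f[OF q] vangle_rot[OF Ou] ..
  }
qed

lemmas psi_props = Inv_props[OF psi_Inv]

end



context tr begin

abbreviation leaf where "leaf v \<equiv> is_leaf V par r v"

definition ell :: "'a \<Rightarrow> complex" where
  "ell v = complex_of_real (if leaf v then 1 else TT) * cis (th v)"

definition pos :: "'a \<Rightarrow> complex" where
  "pos v = (if v = r then (if leaf r then 1 else 0) else psinv (par v) (ell v))"

definition dirn :: "'a \<Rightarrow> 'a \<Rightarrow> complex" where
  "dirn u n = (if n \<in> children V par r u then cis (th n) else -1)"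

lemma ell_norm: "cmod (ell v) \<le> 1" "leaf v \<Longrightarrow> cmod (ell v) = 1" "\<not> leaf v \<Longrightarrow> cmod (ell v) < 1"
  using TT unfolding ell_def by (auto simp: norm_mult)

lemma ell_scale: "\<exists>s>0. ell v = complex_of_real s * cis (th v)"
  using TT unfolding ell_def by (intro exI[of _ "if leaf v then 1 else TT"]) auto

lemma pos_cen: assumes "v \<in> V" "\<not> leaf v" shows "pos v = cen v"
proof (cases "v = r")
  case True thus ?thesis using assms psi_r by (simp add: pos_def cen_def)
next
  case False
  have "cen v = psinv (par v) (moeb (- av v) 0)" unfolding cen_def psi_step[OF assms(1) False] by simp
  also have "moeb (- av v) 0 = av v" by (simp add: moeb_def)
  finally show ?thesis using False assms unfolding pos_def ell_def av_def by simp
qed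

lemma cen_zero: "psi u (cen u) = 0"
  unfolding cen_def using psi_props(8)[of "psinv u 0" u] psi_props(10)[of u] by simp

lemma pos_frame: assumes "v \<in> V" "v \<noteq> r" shows "psi (par v) (pos v) = ell v"
  using assms psi_props(1)[OF ell_norm(1)] unfolding pos_def by simp

lemma pos_norm: assumes "v \<in> V"
  shows "leaf v \<Longrightarrow> cmod (pos v) = 1" "\<not> leaf v \<Longrightarrow> cmod (pos v) < 1" "cmod (pos v) \<le> 1"
proof -
  show L: "leaf v \<Longrightarrow> cmod (pos v) = 1"
    unfolding pos_def using psi_props(4) ell_norm(2) by auto
  show N: "\<not> leaf v \<Longrightarrow> cmod (pos v) < 1"
    unfolding pos_def using psi_props(3) ell_norm(3) by auto
  show "cmod (pos v) \<le> 1" using L N by (cases "leaf v") auto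
qed

lemma par_frame: assumes "v \<in> V" "v \<noteq> r" shows "psi v (pos (par v)) = - complex_of_real TT"
proof -
  have "pos (par v) = cen (par v)" using pos_cen par_nonleaf[OF assms] by blast
  hence "psi (par v) (pos (par v)) = 0" using cen_zero by simp
  hence "psi v (pos (par v)) = cis (- th v) * moeb (av v) 0" unfolding psi_step[OF assms] by simp
  also have "\<dots> = - complex_of_real TT * (cis (- th v) * cis (th v))"
    by (simp add: moeb_def av_def algebra_simps)
  also have "cis (- th v) * cis (th v) = 1" by (simp add: cis_mult)
  finally show ?thesis by simp
qed

lemma nbrs_iff: "n \<in> nbrs V par r u \<longleftrightarrow> n \<in> children V par r u \<or> (u \<noteq> r \<and> n = par u)"
  unfolding nbrs_def by auto

lemma nbr_facts: assumes u: "u \<in> V" and n: "n \<in> nbrs V par r u"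
  shows "n \<in> V" "cmod (dirn u n) = 1" "\<exists>s>0. psi u (pos n) = complex_of_real s * dirn u n"
proof -
  show "n \<in> V" using n u parV unfolding nbrs_iff ch_iff by auto
  show "cmod (dirn u n) = 1" unfolding dirn_def by simp
  show "\<exists>s>0. psi u (pos n) = complex_of_real s * dirn u n"
  proof (cases "n \<in> children V par r u")
    case True
    hence "psi u (pos n) = ell n" using pos_frame[of n] unfolding ch_iff by auto
    thus ?thesis using ell_scale[of n] True unfolding dirn_def by auto
  next
    case False
    hence nn: "u \<noteq> r" "n = par u" using n unfolding nbrs_iff by auto
    have "psi u (pos n) = - complex_of_real TT" using par_frame[OF u nn(1)] nn by simp
    thus ?thesis using False TT unfolding dirn_def by (intro exI[of _ TT]) auto
  qed
qed

lemma ch_nbr: "v \<in> children V par r u \<Longrightarrow> v \<in> nbrs V par r u" unfolding nbrs_iff by simp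

lemma dirn_ch: "v \<in> children V par r u \<Longrightarrow> dirn u v = cis (th v)" unfolding dirn_def by simp

lemma par_not_child: assumes "u \<in> V" "u \<noteq> r" shows "par u \<notin> children V par r u"
  using no2cyc[OF assms(1,2)] unfolding ch_iff by auto

lemma dirn_par: assumes "u \<in> V" "u \<noteq> r" shows "dirn u (par u) = -1"
  using par_not_child[OF assms] unfolding dirn_def by simp

lemma kap_bound: assumes u: "u \<in> V" and v: "v \<in> children V par r u" and n: "n \<in> nbrs V par r u" "n \<noteq> v"
  shows "kap \<le> 1 - Re (dirn u n * cnj (cis (th v)))"
proof (cases "n \<in> children V par r u")
  case True
  have "dirn u n * cnj (cis (th v)) = cis (th n - th v)" using True
    by (simp add: dirn_def cis_cnj cis_mult)
  moreover have "n \<in> V" "v \<in> V" using True v unfolding ch_iff by auto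
  ultimately show ?thesis using kap(3)[of n v] n(2) by simp
next
  case False
  hence "dirn u n = -1" unfolding dirn_def by simp
  moreover have "v \<in> V" using v unfolding ch_iff by auto
  ultimately show ?thesis using kap(2) cos_th[of v] by (simp add: cis_cnj)
qed

lemma hangle_frame: assumes u: "u \<in> V" "\<not> leaf u" and n: "n \<in> nbrs V par r u"
  and p: "cmod p \<le> 1" "psi u p \<noteq> 0"
  shows "hangle (pos u) p (pos n) = vangle (psi u p) (dirn u n)"
proof -
  have "hangle (pos u) p (pos n) = vangle (psi u p) (psi u (pos n))"
    unfolding pos_cen[OF u] cen_def
    using psi_props(9)[OF p(1) pos_norm(3)[OF nbr_facts(1)[OF u(1) n]]] .
  also obtain s where "s > 0" "psi u (pos n) = complex_of_real s * dirn u n" using nbr_facts(3)[OF u(1) n] by blast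
  hence "vangle (psi u p) (psi u (pos n)) = vangle (psi u p) (dirn u n)" using vangle_scale2 by simp
  finally show ?thesis .
qed

lemma v_in_ch: "v \<in> V \<Longrightarrow> v \<noteq> r \<Longrightarrow> v \<in> children V par r (par v)" unfolding ch_iff by simp

lemma dom_char:
  assumes v: "v \<in> V" "v \<noteq> r"
  shows "p \<in> dom_region V par r pos v \<longleftrightarrow> cmod p < 1 \<and> psi (par v) p \<noteq> 0 \<and>
     (\<forall>n \<in> nbrs V par r (par v) - {v}. Re (psi (par v) p * cnj (dirn (par v) n)) < Re (psi (par v) p * cnj (cis (th v))))"
proof -
  let ?u = "par v"
  have u: "?u \<in> V" "\<not> leaf ?u" using par_nonleaf[OF v] by auto
  have vn: "v \<in> nbrs V par r ?u" using ch_nbr v_in_ch v by blast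
  have dv: "dirn ?u v = cis (th v)" using dirn_ch v_in_ch v by blast
  have ne: "p \<noteq> pos ?u \<longleftrightarrow> psi ?u p \<noteq> 0" if "cmod p < 1"
    using psi_props(8)[of p ?u] that unfolding pos_cen[OF u] cen_def by auto
  show ?thesis
  proof
    assume p: "p \<in> dom_region V par r pos v"
    hence p1: "cmod p < 1" "psi ?u p \<noteq> 0" unfolding dom_region_def using ne by auto
    show "cmod p < 1 \<and> psi (par v) p \<noteq> 0 \<and> (\<forall>n \<in> nbrs V par r (par v) - {v}. Re (psi (par v) p * cnj (dirn (par v) n)) < Re (psi (par v) p * cnj (cis (th v))))"
    proof (intro conjI ballI)
      fix n assume n: "n \<in> nbrs V par r ?u - {v}"
      have "hangle (pos ?u) p (pos v) < hangle (pos ?u) p (pos n)" using p n unfolding dom_region_def by auto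
      hence "vangle (psi ?u p) (dirn ?u v) < vangle (psi ?u p) (dirn ?u n)"
        using hangle_frame[OF u _ less_imp_le[OF p1(1)] p1(2)] vn n by simp
      thus "Re (psi ?u p * cnj (dirn ?u n)) < Re (psi ?u p * cnj (cis (th v)))"
        using vangle_less[OF p1(2)] nbr_facts(2)[OF u(1)] vn n dv by auto
    qed (use p1 in auto)
  next
    assume h: "cmod p < 1 \<and> psi (par v) p \<noteq> 0 \<and> (\<forall>n \<in> nbrs V par r (par v) - {v}. Re (psi (par v) p * cnj (dirn (par v) n)) < Re (psi (par v) p * cnj (cis (th v))))"
    have p1: "cmod p < 1" "psi ?u p \<noteq> 0" using h by auto
    show "p \<in> dom_region V par r pos v" unfolding dom_region_def
    proof (intro CollectI conjI ballI)
      show "cmod p < 1" by (rule p1(1))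
      show "p \<noteq> pos ?u" using ne p1 by auto
      fix n assume n: "n \<in> nbrs V par r ?u - {v}"
      have "Re (psi ?u p * cnj (dirn ?u n)) < Re (psi ?u p * cnj (dirn ?u v))" using h n dv by auto
      hence "vangle (psi ?u p) (dirn ?u v) < vangle (psi ?u p) (dirn ?u n)"
        using vangle_less[OF p1(2)] nbr_facts(2)[OF u(1)] vn n by auto
      thus "hangle (pos ?u) p (pos v) < hangle (pos ?u) p (pos n)"
        using hangle_frame[OF u _ less_imp_le[OF p1(1)] p1(2)] vn n by simp
    qed
  qed
qed

end



context tr begin

lemma hyp: "hyp_drawing V par r pos"
  unfolding hyp_drawing_def
proof (intro conjI ballI)
  fix v assume v: "v \<in> V"
  show "if leaf v then cmod (pos v) = 1 else cmod (pos v) < 1" using pos_norm[OF v] by simp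
next
  fix v assume "v \<in> V - {r}"
  hence v: "v \<in> V" "v \<noteq> r" by auto
  let ?u = "par v"
  have u: "?u \<in> V" "\<not> leaf ?u" using par_nonleaf[OF v] by auto
  have fv: "psi ?u (pos v) = ell v" using pos_frame[OF v] .
  have e0: "ell v \<noteq> 0" unfolding ell_def using TT by auto
  have fu: "psi ?u (pos ?u) = 0" using pos_cen[OF u] cen_zero by simp
  show "pos v \<noteq> pos ?u" using fv fu e0 by auto
  fix n assume n: "n \<in> nbrs V par r ?u - {v}"
  have "hangle (pos ?u) (pos v) (pos n) = vangle (ell v) (dirn ?u n)"
    using hangle_frame[OF u _ pos_norm(3)[OF v(1)]] n fv e0 by simp
  also obtain s where s: "s > 0" "ell v = complex_of_real s * cis (th v)" using ell_scale by blast
  hence "vangle (ell v) (dirn ?u n) = vangle (cis (th v)) (dirn ?u n)" using vangle_scale1 by simp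
  finally have h: "hangle (pos ?u) (pos v) (pos n) = vangle (cis (th v)) (dirn ?u n)" .
  have kb: "kap \<le> 1 - Re (dirn ?u n * cnj (cis (th v)))"
    using kap_bound[OF u(1) v_in_ch[OF v]] n by auto
  have "Re (cis (th v) * cnj (dirn ?u n)) = Re (cnj (dirn ?u n * cnj (cis (th v))))"
    by (simp add: mult.commute)
  also have "\<dots> = Re (dirn ?u n * cnj (cis (th v)))" by simp
  finally have "Re (cis (th v) * cnj (dirn ?u n)) < 1" using kb kap(1) by linarith
  hence "vangle (cis (th v)) (dirn ?u n) > 0"
    using vangle_pos nbr_facts(2)[OF u(1)] n by auto
  thus "hangle (pos ?u) (pos v) (pos n) > 0" using h by simp
qed

lemma nest: assumes v: "v \<in> V" "v \<noteq> r" and w: "w \<in> children V par r v"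
  shows "dom_region V par r pos w \<subseteq> dom_region V par r pos v"
proof
  fix p assume p: "p \<in> dom_region V par r pos w"
  have wV: "w \<in> V" "w \<noteq> r" "par w = v" using w unfolding ch_iff by auto
  let ?u = "par v"
  let ?z = "psi v p"
  have P: "cmod p < 1" "?z \<noteq> 0"
    "\<And>n. n \<in> nbrs V par r v - {w} \<Longrightarrow> Re (?z * cnj (dirn v n)) < Re (?z * cnj (cis (th w)))"
    using p dom_char[OF wV(1,2)] wV(3) by auto
  have un: "?u \<in> nbrs V par r v - {w}" using par_not_child[OF v] w v by (auto simp: nbrs_iff)
  have "Re (?z * cnj (-1)) < Re (?z * cnj (cis (th w)))" using P(3)[OF un] dirn_par[OF v] by simp
  hence h: "Re (?z * (cnj (cis (th w)) + 1)) > 0" by (simp add: distrib_left)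
  have z1: "cmod ?z < 1" using psi_props(6)[OF P(1)] .
  let ?x = "psi ?u p"
  let ?t = "th v"
  have x1: "cmod ?x \<le> 1" using psi_props(5) P(1) by simp
  have "?z = cis (- ?t) * moeb (av v) ?x" using psi_step(1)[OF v] by simp
  hence "cis ?t * ?z = (cis ?t * cis (- ?t)) * moeb (av v) ?x" by (simp only: mult.assoc)
  hence mz: "moeb (av v) ?x = cis ?t * ?z" by (simp add: cis_mult)
  have "?x = moeb (- av v) (moeb (av v) ?x)" using moeb_inv[OF av_norm(2) x1] by simp
  also have "\<dots> = moeb (- av v) (cis ?t * ?z)" using mz by simp
  also have "\<dots> = (cis ?t * ?z + complex_of_real TT * cis ?t) / (1 + complex_of_real TT * (cnj (cis ?t) * cis ?t) * ?z)"
    unfolding moeb_def av_def by (simp add: algebra_simps)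
  also have "cnj (cis ?t) * cis ?t = 1" by (simp add: cis_cnj cis_mult)
  also have "cis ?t * ?z + complex_of_real TT * cis ?t = cis ?t * (?z + complex_of_real TT)" by (simp add: algebra_simps)
  finally have xW: "?x = cis ?t * ((?z + complex_of_real TT) / (1 + complex_of_real TT * ?z))" by simp
  define W where "W = (?z + complex_of_real TT) / (1 + complex_of_real TT * ?z)"
  have Tk: "TT = 1 - kap / 32" "0 < kap" "kap \<le> 1" using kap unfolding TT_def by auto
  have eW: "cmod (cis (th w)) = 1" "Re (cis (th w)) \<ge> 0" using cos_th[OF wV(1)] by auto
  have ReW: "Re W > 0" unfolding W_def
    using core(1)[OF Tk z1 eW h, of "-1"] Tk by simp
  have xW': "?x = cis ?t * W" using xW W_def by simp
  have vu: "v \<in> children V par r ?u" using v_in_ch[OF v] .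
  show "p \<in> dom_region V par r pos v"
    unfolding dom_char[OF v]
  proof (intro conjI ballI)
    show "cmod p < 1" by (rule P(1))
    show "?x \<noteq> 0" using xW' ReW by auto
    fix n assume n: "n \<in> nbrs V par r ?u - {v}"
    define f where "f = dirn ?u n * cnj (cis ?t)"
    have f1: "cmod f = 1" unfolding f_def using nbr_facts(2)[OF par_nonleaf(2)[OF v]] n by (auto simp: norm_mult)
    have fk: "1 - Re f \<ge> kap" unfolding f_def using kap_bound[OF par_nonleaf(2)[OF v] vu] n by auto
    have c: "Re (W * (1 - cnj f)) > 0" unfolding W_def using core(2)[OF Tk z1 eW h f1 fk] .
    have cc: "cnj (cis ?t) * cis ?t = 1" by (simp add: cis_cnj cis_mult)
    have e1: "?x * cnj (cis ?t) = W" unfolding xW' using cc by (simp add: algebra_simps)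
    have e2: "?x * cnj (dirn ?u n) = W * cnj f" unfolding xW' f_def by (simp add: algebra_simps)
    have "Re (W * (1 - cnj f)) = Re W - Re (W * cnj f)" by (simp add: right_diff_distrib)
    thus "Re (?x * cnj (dirn ?u n)) < Re (?x * cnj (cis (th v)))" using c e1 e2 by simp
  qed
qed

lemma anc_nest: "\<And>w. w \<in> V \<Longrightarrow> w \<noteq> r \<Longrightarrow> v \<in> V \<Longrightarrow> v \<noteq> r \<Longrightarrow> (par ^^ k) w = v \<Longrightarrow> k > 0 \<Longrightarrow>
   (\<forall>j<k. (par ^^ j) w \<noteq> r) \<Longrightarrow> dom_region V par r pos w \<subseteq> dom_region V par r pos v"
proof (induction k)
  case 0 thus ?case by simp
next
  case (Suc m)
  show ?case
  proof (cases "m = 0")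
    case True
    hence "par w = v" using Suc.prems by simp
    thus ?thesis using nest[OF Suc.prems(3,4)] Suc.prems(1,2) unfolding ch_iff by auto
  next
    case False
    have w': "par w \<in> V" "par w \<noteq> r" using parV Suc.prems(1,2) Suc.prems(7) False by auto
    have "(par ^^ m) (par w) = v" using Suc.prems(5) by (simp add: funpow_Suc_right del: funpow.simps)
    moreover have "\<forall>j<m. (par ^^ j) (par w) \<noteq> r"
    proof (intro allI impI)
      fix j assume "j < m"
      hence "(par ^^ Suc j) w \<noteq> r" using Suc.prems(7) by blast
      thus "(par ^^ j) (par w) \<noteq> r" by (simp add: funpow_Suc_right del: funpow.simps)
    qed
    ultimately have "dom_region V par r pos (par w) \<subseteq> dom_region V par r pos v"
      using Suc.IH[OF w' Suc.prems(3,4)] False by auto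
    moreover have "dom_region V par r pos w \<subseteq> dom_region V par r pos (par w)"
      using nest[OF w'] Suc.prems(1,2) unfolding ch_iff by auto
    ultimately show ?thesis by blast
  qed
qed

lemma anc_sub: assumes "v \<in> V" "v \<noteq> r" "w \<in> V" "w \<noteq> r" "ancestor par r v w"
  shows "dom_region V par r pos w \<subseteq> dom_region V par r pos v"
  using assms anc_nest unfolding ancestor_def by blast

lemma sib_disj: assumes a: "a \<in> V" "a \<noteq> r" and b: "b \<in> V" "b \<noteq> r" "a \<noteq> b" and pp: "par a = par b"
  shows "dom_region V par r pos a \<inter> dom_region V par r pos b = {}"
proof (rule ccontr)
  assume "dom_region V par r pos a \<inter> dom_region V par r pos b \<noteq> {}"
  then obtain p where pa: "p \<in> dom_region V par r pos a" and pb: "p \<in> dom_region V par r pos b" by blast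
  have bc: "b \<in> nbrs V par r (par a) - {a}" "b \<in> children V par r (par a)" using a b pp by (auto simp: nbrs_iff ch_iff)
  have ac: "a \<in> nbrs V par r (par b) - {b}" "a \<in> children V par r (par b)" using a b pp by (auto simp: nbrs_iff ch_iff)
  have "Re (psi (par a) p * cnj (dirn (par a) b)) < Re (psi (par a) p * cnj (cis (th a)))"
    using pa dom_char[OF a] bc(1) by blast
  moreover have "Re (psi (par b) p * cnj (dirn (par b) a)) < Re (psi (par b) p * cnj (cis (th b)))"
    using pb dom_char[OF b(1,2)] ac(1) by blast
  ultimately show False using dirn_ch[OF bc(2)] dirn_ch[OF ac(2)] pp by simp
qed

lemma disj: "v \<in> V \<Longrightarrow> v \<noteq> r \<Longrightarrow> w \<in> V \<Longrightarrow> w \<noteq> r \<Longrightarrow> v \<noteq> w \<Longrightarrow> \<not> ancestor par r v w \<Longrightarrow>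
   \<not> ancestor par r w v \<Longrightarrow> dom_region V par r pos v \<inter> dom_region V par r pos w = {}"
proof (induction "depth v + depth w" arbitrary: v w rule: less_induct)
  case less
  have H: "dom_region V par r pos a \<inter> dom_region V par r pos b = {}"
    if a: "a \<in> V" "a \<noteq> r" and b: "b \<in> V" "b \<noteq> r" and ab: "a \<noteq> b" "\<not> ancestor par r a b" "\<not> ancestor par r b a"
      and s: "depth a + depth b = depth v + depth w" and dle: "depth b \<le> depth a" for a b
  proof (cases "par a = par b")
    case True thus ?thesis using sib_disj a b ab by blast
  next
    case False
    let ?a = "par a"
    have aV: "?a \<in> V" using parV a by blast
    have da: "depth a = Suc (depth ?a)" using depth_par[OF a] .
    have ar: "?a \<noteq> r"
    proof
      assume ar: "?a = r"
      hence "depth a = 1" using da depth_r by simp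
      moreover have "depth b = Suc (depth (par b))" using depth_par[OF b] .
      ultimately have "depth (par b) = 0" using dle by simp
      hence "par b = r" using depth_spec(1)[OF parV[OF b]] by simp
      thus False using ar False by simp
    qed
    have ab': "?a \<noteq> b"
    proof
      assume "?a = b"
      hence "ancestor par r b a" unfolding ancestor_def using a(2) by (intro exI[of _ 1]) auto
      thus False using ab by simp
    qed
    have n1: "\<not> ancestor par r b ?a"
    proof
      assume "ancestor par r b ?a"
      then obtain k where k: "k > 0" "(par ^^ k) ?a = b" "\<forall>j<k. (par ^^ j) ?a \<noteq> r" unfolding ancestor_def by blast
      have "(par ^^ Suc k) a = b" using k(2) by (simp add: funpow_Suc_right del: funpow.simps)
      moreover have "\<forall>j<Suc k. (par ^^ j) a \<noteq> r"
      proof (intro allI impI)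
        fix j assume j: "j < Suc k"
        show "(par ^^ j) a \<noteq> r"
        proof (cases j)
          case 0 thus ?thesis using a by simp
        next
          case (Suc i)
          hence "(par ^^ i) ?a \<noteq> r" using k(3) j by simp
          thus ?thesis using Suc by (simp add: funpow_Suc_right del: funpow.simps)
        qed
      qed
      ultimately have "ancestor par r b a" unfolding ancestor_def by blast
      thus False using ab by simp
    qed
    have n2: "\<not> ancestor par r ?a b"
    proof
      assume "ancestor par r ?a b"
      then obtain k where k: "k > 0" "depth b = k + depth ?a" "(par ^^ k) b = ?a" using anc_depth aV by blast
      hence "k = 1" using dle da by simp
      hence "par b = ?a" using k(3) by simp
      thus False using False by simp
    qed
    have "dom_region V par r pos ?a \<inter> dom_region V par r pos b = {}"
      using less.hyps[of ?a b] aV ar b ab' n1 n2 s da by simp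
    moreover have "dom_region V par r pos a \<subseteq> dom_region V par r pos ?a"
      using nest[OF aV ar] a unfolding ch_iff by auto
    ultimately show ?thesis by blast
  qed
  show ?case
  proof (cases "depth w \<le> depth v")
    case True thus ?thesis using H less.prems by blast
  next
    case False
    hence "dom_region V par r pos w \<inter> dom_region V par r pos v = {}" using H less.prems by auto
    thus ?thesis by blast
  qed
qed

lemma good: "good_hyp_drawing V par r pos"
  unfolding good_hyp_drawing_def
proof (intro conjI hyp ballI impI)
  fix v w assume v: "v \<in> V - {r}" and w: "w \<in> V - {r}" and vw: "v \<noteq> w"
  show "if ancestor par r v w \<or> ancestor par r w v
         then dom_region V par r pos v \<subseteq> dom_region V par r pos w \<or>
              dom_region V par r pos w \<subseteq> dom_region V par r pos v
         else dom_region V par r pos v \<inter> dom_region V par r pos w = {}"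
    using anc_sub[of v w] anc_sub[of w v] disj[of v w] v w vw by auto
qed

end

theorem lemma2:
  fixes V :: "'a set" and par :: "'a \<Rightarrow> 'a" and r :: 'a
  assumes "rooted_tree V par r"
  shows "\<exists>pos. good_hyp_drawing V par r pos"
proof -
  interpret tr V par r using assms by unfold_locales
  show ?thesis using good by blast
qed



end
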